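(* Let $D$ be an indecomposable chord diagram with $|D|$ chords, let $C$ be a chord diagram, and let $k,\ell$ be integers for which the operations below are defined. Then $$\mathrm{Ins}_{D,\ell}\big(R_k(C)\big)=R_k\big(\mathrm{Ins}_{D,\ell-2}(C)\big)\quad\text{if }k\le \ell-2,$$ $$\mathrm{Ins}_{D,\ell}\big(R_k(C)\big)=R_{k+2|D|}\big(\mathrm{Ins}_{D,\ell-1}(C)\big)\quad\text{if }1\le \ell-1\le k.$$
   Context: A chord diagram of size $n$ is a perfect matching of $2n$ linearly ordered points into $n$ pairs (chords), considered up to order isomorphism; the root chord is the chord containing the first point. Its intervals are the $2n-1$ gaps between consecutive points, numbered $1,\dots,2n-1$ from left to right. A diagram is indecomposable if it is not the concatenation (side by side juxtaposition) of two nonempty diagrams. For a diagram $C$ of size $n$ and $1\le k\le 2n-1$, $R_k(C)$ is the diagram of size $n+1$ obtained by adding a new chord whose left endpoint is placed before all points of $C$ and whose right endpoint is placed in the $k$-th interval of $C$ (this chord is the new root chord). For a diagram $D'$, $\mathrm{Ins}_{D',k}(C)$ is the diagram obtained by placing all points of $D'$ (in order, with their matching) inside the $k$-th interval of $C$. *)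

theory Defs
  imports Main
begin

text \<open>A chord diagram on 2n linearly ordered points 0,...,2n-1 is represented
canonically (i.e. up to order isomorphism) by the list xs of length 2n whose
i-th entry is the partner of point i in the perfect matching.\<close>

definition chord_diagram :: "nat list \<Rightarrow> bool" where
  "chord_diagram xs \<longleftrightarrow> even (length xs) \<and>
     (\<forall>i < length xs. xs ! i < length xs \<and> xs ! i \<noteq> i \<and> xs ! (xs ! i) = i)"

definition dsize :: "nat list \<Rightarrow> nat" where
  "dsize xs = length xs div 2"

text \<open>Interval k (1 \<le> k \<le> 2n-1) is the gap between point k-1 and point k
(0-indexed), i.e. right after the first k points.\<close>

definition valid_interval :: "nat list \<Rightarrow> nat \<Rightarrow> bool" where
  "valid_interval C k \<longleftrightarrow> 1 \<le> k \<and> k \<le> 2 * dsize C - 1"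

definition concat_diag :: "nat list \<Rightarrow> nat list \<Rightarrow> nat list" where
  "concat_diag A B = A @ map (\<lambda>j. j + length A) B"

definition indecomposable :: "nat list \<Rightarrow> bool" where
  "indecomposable D \<longleftrightarrow>
     \<not> (\<exists>A B. chord_diagram A \<and> chord_diagram B \<and> A \<noteq> [] \<and> B \<noteq> [] \<and> D = concat_diag A B)"

text \<open>R_k(C): new root chord from before all points to interval k.\<close>
definition R :: "nat \<Rightarrow> nat list \<Rightarrow> nat list" where
  "R k C = (let t = (\<lambda>i. if i < k then i + 1 else i + 2) in
      (k + 1) # map (\<lambda>p. t p) (take k C) @ [0] @ map (\<lambda>p. t p) (drop k C))"

definition Ins :: "nat list \<Rightarrow> nat \<Rightarrow> nat list \<Rightarrow> nat list" where
  "Ins D k C = (let s = (\<lambda>i. if i < k then i else i + length D) in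
      map (\<lambda>p. s p) (take k C) @ map (\<lambda>j. j + k) D @ map (\<lambda>p. s p) (drop k C))"

end

theory Submission
  imports Defs
begin

lemma split3: "k \<le> j \<Longrightarrow> C = take k C @ take (j - k) (drop k C) @ drop j C"
  by (metis append_take_drop_id drop_drop le_add_diff_inverse2)

lemma case1:
  assumes "length A = k" "length B = l - 2 - k" "k + 2 \<le> l"
  shows "Ins D l (R k (A @ B @ E)) = R k (Ins D (l - 2) (A @ B @ E))"
proof -
  have l: "l = k + length B + 2" using assms by simp
  have f: "\<And>p::nat. (if (if p < k then p + 1 else p + 2) < l then (if p < k then p + 1 else p + 2)
      else (if p < k then p + 1 else p + 2) + length D)
    = (if (if p < l - 2 then p else p + length D) < k then (if p < l - 2 then p else p + length D) + 1
      else (if p < l - 2 then p else p + length D) + 2)"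
    using assms by auto
  have g: "map (\<lambda>j. j + l) D = map (\<lambda>p. if p < k then p + 1 else p + 2) (map (\<lambda>j. j + (l - 2)) D)"
    using assms by auto
  show ?thesis
    unfolding Ins_def R_def Let_def map_map comp_def f using assms(1) g
    by (simp add: l)
qed

lemma case2:
  assumes "length A = l - 1" "length B = k + 1 - l" "l - 1 \<le> k" "2 \<le> l" "length D = 2 * m" "\<forall>x\<in>set D. x < length D"
  shows "Ins D l (R k (A @ B @ E)) = R (k + 2 * m) (Ins D (l - 1) (A @ B @ E))"
proof -
  have l: "l = length A + 1" and k: "k = length A + length B" using assms by simp_all
  have f: "\<And>p::nat. (if (if p < k then p + 1 else p + 2) < l then (if p < k then p + 1 else p + 2)
      else (if p < k then p + 1 else p + 2) + length D)
    = (if (if p < l - 1 then p else p + length D) < k + 2 * m then (if p < l - 1 then p else p + length D) + 1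
      else (if p < l - 1 then p else p + length D) + 2)"
    using assms by auto
  have g: "map (\<lambda>j. j + l) D = map (\<lambda>p. if p < k + 2 * m then p + 1 else p + 2) (map (\<lambda>j. j + (l - 1)) D)"
    using assms by auto
  show ?thesis
    unfolding Ins_def R_def Let_def map_map comp_def f using assms(1,2,4,5) g
    by (simp add: l k)
qed

theorem lemma3p2:
  fixes D C :: "nat list" and k l :: nat
  assumes "chord_diagram D" and "indecomposable D" and "chord_diagram C"
  shows "(k + 2 \<le> l \<and> valid_interval C k \<and> valid_interval (R k C) l
            \<and> valid_interval C (l - 2) \<and> valid_interval (Ins D (l - 2) C) k
          \<longrightarrow> Ins D l (R k C) = R k (Ins D (l - 2) C))
       \<and> (1 \<le> l - 1 \<and> l - 1 \<le> k \<and> valid_interval C k \<and> valid_interval (R k C) l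
            \<and> valid_interval C (l - 1) \<and> valid_interval (Ins D (l - 1) C) (k + 2 * dsize D)
          \<longrightarrow> Ins D l (R k C) = R (k + 2 * dsize D) (Ins D (l - 1) C))"
proof (intro conjI impI)
  assume h: "k + 2 \<le> l \<and> valid_interval C k \<and> valid_interval (R k C) l
            \<and> valid_interval C (l - 2) \<and> valid_interval (Ins D (l - 2) C) k"
  then have h1: "k + 2 \<le> l" and h2: "valid_interval C (l - 2)" by blast+
  have len: "l - 2 \<le> length C" using h2 unfolding valid_interval_def dsize_def
    using div_times_less_eq_dividend[of "length C" 2] by linarith
  define A where "A = take k C"
  define B where "B = take (l - 2 - k) (drop k C)"
  define E where "E = drop (l - 2) C"
  have kk: "k \<le> l - 2" using h1 by linarith
  have CC: "C = A @ B @ E" unfolding A_def B_def E_def using split3[OF kk, of C] .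
  have lA: "length A = k" unfolding A_def using len kk by simp
  have lB: "length B = l - 2 - k" unfolding B_def using len kk by simp
  have "Ins D l (R k (A @ B @ E)) = R k (Ins D (l - 2) (A @ B @ E))"
    by (rule case1[OF lA lB h1])
  then show "Ins D l (R k C) = R k (Ins D (l - 2) C)" by (simp only: CC[symmetric])
next
  assume h: "1 \<le> l - 1 \<and> l - 1 \<le> k \<and> valid_interval C k \<and> valid_interval (R k C) l
            \<and> valid_interval C (l - 1) \<and> valid_interval (Ins D (l - 1) C) (k + 2 * dsize D)"
  then have h1: "1 \<le> l - 1" and h2: "l - 1 \<le> k" and h3: "valid_interval C k" by blast+
  have len: "k \<le> length C" using h3 unfolding valid_interval_def dsize_def
    using div_times_less_eq_dividend[of "length C" 2] by linarith
  define A where "A = take (l - 1) C"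
  define B where "B = take (k - (l - 1)) (drop (l - 1) C)"
  define E where "E = drop k C"
  have CC: "C = A @ B @ E" unfolding A_def B_def E_def using split3[OF h2, of C] .
  have lA: "length A = l - 1" unfolding A_def using len h2 by simp
  have lB: "length B = k + 1 - l" unfolding B_def using len h2 h1 by simp
  have l2: "2 \<le> l" using h1 by linarith
  have lD: "length D = 2 * dsize D" using assms(1) by (auto simp: chord_diagram_def dsize_def)
  have sD: "\<forall>x\<in>set D. x < length D" using assms(1)
    by (auto simp: chord_diagram_def in_set_conv_nth)
  have "Ins D l (R k (A @ B @ E)) = R (k + 2 * dsize D) (Ins D (l - 1) (A @ B @ E))"
    by (rule case2[OF lA lB h2 l2 lD sD])
  then show "Ins D l (R k C) = R (k + 2 * dsize D) (Ins D (l - 1) C)" by (simp only: CC[symmetric])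
qed

end
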